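(* Let weights $a_0,\dots,a_n>0$ be given, let $\omega\in\mathbb{C}[x_0,\dots,x_n]$ be weighted homogeneous of degree $d$ (with $\deg x_i=a_i$) having $0$ as its unique critical point, and let $t=\gcd(d,\sum_i a_i)$. Assume $a_i\le d/2$ for all $i$, and let $I=\{i\in\{0,\dots,n\}: a_i=1\}$. If $|I|>\frac{2t}{d-2}$, then $\mathrm{Jac}(\omega_g)_{t-k_g-\frac{d\,\mathrm{rk}W_g}{2}}=0$ for all $g\in\mu_d\setminus\{1\}$.
   Context: $\mu_d\subset\mathbb{C}^*$ is the group of $d$-th roots of unity. For $g\in\mu_d$ let $I_g=\{i: g^{a_i}\ne1\}$, $\mathrm{rk}W_g=|I_g|$, $k_g=-\sum_{i\in I_g}a_i$, and $\omega_g$ the image of $\omega$ in $\mathbb{C}[x_0,\dots,x_n]/(x_i)_{i\in I_g}$. $\mathrm{Jac}(\omega_g)$ denotes the Jacobian ring of $\omega_g$ (quotient of the polynomial ring in the variables $x_i$, $i\notin I_g$, by the partial derivatives of $\omega_g$), graded by $\deg x_i=a_i$; its pieces in negative degree are zero. *)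

theory Defs
  imports Complex_Main "HOL-Library.Poly_Mapping"
begin

text \<open>Polynomials in countably many variables x_0, x_1, ... with complex coefficients:
  a monomial is a finitely supported exponent vector, a polynomial a finitely
  supported coefficient function on monomials (a commutative ring via Poly_Mapping).\<close>

type_synonym cpoly = "(nat \<Rightarrow>\<^sub>0 nat) \<Rightarrow>\<^sub>0 complex"

definition pvars :: "cpoly \<Rightarrow> nat set" where
  "pvars p = (\<Union>m\<in>Poly_Mapping.keys p. Poly_Mapping.keys m)"

definition peval :: "cpoly \<Rightarrow> (nat \<Rightarrow> complex) \<Rightarrow> complex" where
  "peval p x = (\<Sum>m\<in>Poly_Mapping.keys p. Poly_Mapping.lookup p m * (\<Prod>i\<in>Poly_Mapping.keys m. x i ^ Poly_Mapping.lookup m i))"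

definition pdiff :: "nat \<Rightarrow> cpoly \<Rightarrow> cpoly" where
  "pdiff i p = (\<Sum>m\<in>Poly_Mapping.keys p. Poly_Mapping.single (m - Poly_Mapping.single i 1)
                               (Poly_Mapping.lookup p m * of_nat (Poly_Mapping.lookup m i)))"

definition wdeg :: "(nat \<Rightarrow> nat) \<Rightarrow> (nat \<Rightarrow>\<^sub>0 nat) \<Rightarrow> nat" where
  "wdeg a m = (\<Sum>i\<in>Poly_Mapping.keys m. a i * Poly_Mapping.lookup m i)"

text \<open>p is weighted homogeneous of (rational) weighted degree e: every monomial
  occurring in p has weighted degree e.  (The zero polynomial is homogeneous of
  every degree.)\<close>
definition whomog :: "(nat \<Rightarrow> nat) \<Rightarrow> rat \<Rightarrow> cpoly \<Rightarrow> bool" where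
  "whomog a e p \<longleftrightarrow> (\<forall>m\<in>Poly_Mapping.keys p. of_nat (wdeg a m) = e)"

text \<open>Image of p modulo the ideal (x_i)_{i in S}: drop every monomial involving
  some variable in S.\<close>
definition kill_vars :: "nat set \<Rightarrow> cpoly \<Rightarrow> cpoly" where
  "kill_vars S p = (\<Sum>m\<in>{m\<in>Poly_Mapping.keys p. Poly_Mapping.keys m \<inter> S = {}}. Poly_Mapping.single m (Poly_Mapping.lookup p m))"

definition in_jacobian_ideal :: "nat set \<Rightarrow> cpoly \<Rightarrow> cpoly \<Rightarrow> bool" where
  "in_jacobian_ideal V q p \<longleftrightarrow>
     (\<exists>c :: nat \<Rightarrow> cpoly. (\<forall>i\<in>V. pvars (c i) \<subseteq> V) \<and> p = (\<Sum>i\<in>V. c i * pdiff i q))"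

text \<open>The graded piece of weighted degree e of Jac(q) = C[x_i : i in V]/(dq/dx_i)_{i in V}
  vanishes: every weighted homogeneous polynomial of degree e in the variables V lies in
  the Jacobian ideal.  Since the Jacobian ideal of a weighted homogeneous q is homogeneous,
  this is exactly the vanishing of the degree-e piece of the quotient.  If e is not a
  non-negative integer, only p = 0 qualifies, so the piece is (correctly) zero.\<close>
definition jac_piece_zero :: "(nat \<Rightarrow> nat) \<Rightarrow> nat set \<Rightarrow> cpoly \<Rightarrow> rat \<Rightarrow> bool" where
  "jac_piece_zero a V q e \<longleftrightarrow>
     (\<forall>p. pvars p \<subseteq> V \<and> whomog a e p \<longrightarrow> in_jacobian_ideal V q p)"

definition Ig :: "nat \<Rightarrow> (nat \<Rightarrow> nat) \<Rightarrow> complex \<Rightarrow> nat set" where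
  "Ig n a g = {i\<in>{0..n}. g ^ a i \<noteq> 1}"

end

theory Submission
  imports Defs
begin

theorem lemma3p9:
  fixes n d :: nat and a :: "nat \<Rightarrow> nat" and \<omega> :: cpoly
  assumes wpos: "\<forall>i\<in>{0..n}. a i > 0"
    and vars: "pvars \<omega> \<subseteq> {0..n}"
    and homog: "whomog a (of_nat d) \<omega>"
    and crit: "\<forall>x :: nat \<Rightarrow> complex.
                 (\<forall>i\<in>{0..n}. peval (pdiff i \<omega>) x = 0) \<longrightarrow> (\<forall>i\<in>{0..n}. x i = 0)"
    and half: "\<forall>i\<in>{0..n}. 2 * a i \<le> d"
    and big: "real (card {i\<in>{0..n}. a i = 1}) * (real d - 2)
                > 2 * real (gcd d (\<Sum>i\<in>{0..n}. a i))"
  shows "\<forall>g :: complex. g ^ d = 1 \<and> g \<noteq> 1 \<longrightarrow>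
           jac_piece_zero a ({0..n} - Ig n a g) (kill_vars (Ig n a g) \<omega>)
             (of_nat (gcd d (\<Sum>i\<in>{0..n}. a i)) + of_int (\<Sum>i\<in>Ig n a g. int (a i))
              - of_nat d * of_nat (card (Ig n a g)) / 2)"
proof (intro allI impI)
  fix g :: complex
  assume g: "g ^ d = 1 \<and> g \<noteq> 1"
  define J where "J = Ig n a g"
  define I where "I = {i\<in>{0..n}. a i = 1}"
  define t where "t = gcd d (\<Sum>i\<in>{0..n}. a i)"
  define m where "m = card I"
  have finJ: "finite J" unfolding J_def Ig_def by auto
  have IJ: "I \<subseteq> J" using g unfolding I_def J_def Ig_def by auto
  have d3: "d \<ge> 3"
  proof (rule ccontr)
    assume "\<not> d \<ge> 3"
    then have "real d - 2 \<le> 0" by auto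
    then have "real (card {i\<in>{0..n}. a i = 1}) * (real d - 2) \<le> 0"
      by (simp add: mult_nonneg_nonpos)
    then show False using big by (smt (verit) of_nat_0_le_iff)
  qed
  have "real (m * (d - 2)) > real (2 * t)"
    using big d3 unfolding m_def I_def t_def by (simp add: of_nat_diff)
  then have bignat: "m * (d - 2) > 2 * t" by linarith
  then have bigrat: "(of_nat m :: rat) * (of_nat d - 2) > 2 * of_nat t"
  proof -
    have "(of_nat (m * (d - 2)) :: rat) > of_nat (2 * t)" using bignat by (simp only: of_nat_less_iff)
    moreover have "(of_nat (d - 2) :: rat) = of_nat d - 2" using d3 by (simp add: of_nat_diff)
    ultimately show ?thesis by simp
  qed
  have S: "(\<Sum>i\<in>J. (of_nat (a i) - of_nat d / 2 :: rat))
      = of_int (\<Sum>i\<in>J. int (a i)) - of_nat d * of_nat (card J) / 2"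
    by (simp add: sum_subtractf)
  have nonpos: "\<And>i. i \<in> J \<Longrightarrow> (of_nat (a i) - of_nat d / 2 :: rat) \<le> 0"
  proof -
    fix i assume "i \<in> J"
    then have "2 * a i \<le> d" using half unfolding J_def Ig_def by auto
    then have "(2 * of_nat (a i) :: rat) \<le> of_nat d"
      by (metis of_nat_le_iff of_nat_mult of_nat_numeral)
    then show "(of_nat (a i) - of_nat d / 2 :: rat) \<le> 0" by linarith
  qed
  have split: "(\<Sum>i\<in>J. (of_nat (a i) - of_nat d / 2 :: rat))
      = (\<Sum>i\<in>I. (of_nat (a i) - of_nat d / 2 :: rat)) + (\<Sum>i\<in>J - I. (of_nat (a i) - of_nat d / 2 :: rat))"
    using finJ IJ by (metis sum.subset_diff add.commute)
  have "(\<Sum>i\<in>J - I. (of_nat (a i) - of_nat d / 2 :: rat)) \<le> 0"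
    using nonpos by (intro sum_nonpos) auto
  moreover have "(\<Sum>i\<in>I. (of_nat (a i) - of_nat d / 2 :: rat)) = of_nat m * (1 - of_nat d / 2)"
    unfolding m_def by (simp add: I_def)
  ultimately have le: "(\<Sum>i\<in>J. (of_nat (a i) - of_nat d / 2 :: rat)) \<le> of_nat m * (1 - of_nat d / 2)"
    using split by linarith
  define e where "e = (of_nat t + of_int (\<Sum>i\<in>J. int (a i)) - of_nat d * of_nat (card J) / 2 :: rat)"
  have "of_nat m * (1 - of_nat d / 2) = - (of_nat m * (of_nat d - 2)) / (2::rat)"
    by (simp add: field_simps)
  then have eneg: "e < 0" using le S bigrat unfolding e_def by linarith
  show "jac_piece_zero a ({0..n} - Ig n a g) (kill_vars (Ig n a g) \<omega>)
             (of_nat (gcd d (\<Sum>i\<in>{0..n}. a i)) + of_int (\<Sum>i\<in>Ig n a g. int (a i))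
              - of_nat d * of_nat (card (Ig n a g)) / 2)"
    unfolding jac_piece_zero_def
  proof (intro allI impI)
    fix p assume hp: "pvars p \<subseteq> {0..n} - Ig n a g \<and> whomog a (of_nat (gcd d (\<Sum>i\<in>{0..n}. a i)) + of_int (\<Sum>i\<in>Ig n a g. int (a i))
              - of_nat d * of_nat (card (Ig n a g)) / 2) p"
    then have "whomog a e p" unfolding e_def J_def t_def by simp
    then have "Poly_Mapping.keys p = {}" using eneg unfolding whomog_def
      by (metis all_not_in_conv of_nat_0_le_iff not_le)
    then have p0: "p = 0" by simp
    show "in_jacobian_ideal ({0..n} - Ig n a g) (kill_vars (Ig n a g) \<omega>) p"
      unfolding in_jacobian_ideal_def
      by (rule exI[of _ "\<lambda>_. 0"]) (simp add: p0 pvars_def)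
  qed
qed

end
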